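(* Let $A\in\mathbb R^{d\times d}$ be symmetric positive definite with all eigenvalues in $[\Lambda_{\min,\Theta},\Lambda_{\max,\Theta}]$ for some $0<\Lambda_{\min,\Theta}\le\Lambda_{\max,\Theta}<\infty$, let $\nu>0$, and let $K_\nu(r)=\frac{2^{1-\nu}}{\Gamma(\nu)}\,\big(\sqrt{r^\top Ar}\big)^{\nu}\,\mathfrak K_\nu\big(\sqrt{r^\top Ar}\big)$, $r\in\mathbb R^d$, be the geometric anisotropic Matérn correlation function, where $\mathfrak K_\nu$ is the modified Bessel function of the second kind. Then for all $\beta\in\mathbb N$ and $m\in\mathbb N$ there is a finite constant $C_{\beta,A}$ such that $$\Big|\frac{\partial^m}{\partial\nu^m}K_\nu(r)\Big|\le\frac{C_{\beta,A}}{1+\|r\|_2^{2\beta}}\quad\text{for all } r\in\mathbb R^d.$$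
   Context: $\Gamma$ denotes the Gamma function. *)

theory Defs
  imports "HOL-Analysis.Analysis"
begin

text \<open>Modified Bessel function of the second kind, via its standard integral
  representation, valid for x > 0.\<close>
definition besselK :: "real \<Rightarrow> real \<Rightarrow> real" where
  "besselK nu x = integral {0..} (\<lambda>t. exp (- x * cosh t) * cosh (nu * t))"

definition is_eigenvalue :: "real^'d^'d \<Rightarrow> real \<Rightarrow> bool" where
  "is_eigenvalue A l \<longleftrightarrow> (\<exists>v. v \<noteq> 0 \<and> A *v v = l *\<^sub>R v)"

definition pos_def :: "real^'d^'d \<Rightarrow> bool" where
  "pos_def A \<longleftrightarrow> (\<forall>x. x \<noteq> 0 \<longrightarrow> x \<bullet> (A *v x) > 0)"

text \<open>Geometric anisotropic Matern correlation function; at r = 0 it takes its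
  limiting value 1.\<close>
definition matern :: "real^'d^'d \<Rightarrow> real \<Rightarrow> real^'d \<Rightarrow> real" where
  "matern A nu r =
     (if r = 0 then 1
      else (let s = sqrt (r \<bullet> (A *v r)) in
            2 powr (1 - nu) / Gamma nu * s powr nu * besselK nu s))"

end

theory Submission
  imports Defs "HOL-Complex_Analysis.Complex_Analysis"
begin


lemma maj_exponent:
  fixes a b x w s :: real
  assumes "0 < a" "a \<le> x" "x \<le> b" "0 \<le> s"
  shows "x*w - exp w - (s^2/4)*exp(-w) \<le> -s/2 + ((b+1)^2 - min a 1 * \<bar>w\<bar>)"
proof -
  define u where "u = exp w"
  have u: "u > 0" by (simp add: u_def)
  have em: "exp (-w) = 1/u" by (simp add: u_def exp_minus field_simps)
  have am: "exp w + (s^2/4)*exp(-w) \<ge> s"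
  proof -
    have "u + (s^2/4)*(1/u) - s = (u - s/2)^2 / u" using u by (simp add: field_simps power2_eq_square)
    also have "\<dots> \<ge> 0" using u by simp
    finally show ?thesis by (simp add: em u_def[symmetric])
  qed
  have q0: "(s^2/4)*exp(-w) \<ge> 0" by simp
  have key: "x*w - exp w/2 \<le> (b+1)^2 - min a 1 * \<bar>w\<bar>"
  proof (cases "w \<ge> 0")
    case True
    have "1 + w + w^2/2 \<le> exp w" using exp_lower_Taylor_quadratic[OF True] .
    hence e: "exp w / 2 \<ge> w^2/4" using True by (simp add: power2_eq_square) 
    have "x*w \<le> b*w" using True assms by (simp add: mult_right_mono)
    moreover have "(b+1)*w \<le> w^2/4 + (b+1)^2"
    proof -
      have "(w/2 - (b+1))^2 \<ge> 0" by simp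
      thus ?thesis by (simp add: power2_eq_square algebra_simps)
    qed
    moreover have "min a 1 * w \<le> w" using True mult_right_mono[of "min a 1" 1 w] by simp
    ultimately show ?thesis using True e by (simp add: algebra_simps)
  next
    case False
    have "x*w \<le> a*w" using False assms by (simp add: mult_right_mono_neg)
    moreover have "a*w \<le> min a 1 * w" using False by (simp add: mult_right_mono_neg)
    moreover have "exp w \<ge> 0" by simp
    moreover have "(b+1)^2 \<ge> 0" by simp
    moreover have "min a 1 * \<bar>w\<bar> = -(min a 1 * w)" using False by simp
    ultimately show ?thesis by linarith
  qed
  show ?thesis using am q0 key by linarith
qed



lemma exp_abs_integrable:
  fixes c :: real assumes c: "c > 0"
  shows "(\<lambda>w::real. exp(-c*\<bar>w\<bar>)) integrable_on UNIV"
proof -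
  define f where "f = (\<lambda>w::real. exp(-c*\<bar>w\<bar>))"
  have "(\<lambda>w::real. exp(-c*w)) integrable_on {0..}"
    using integrable_on_exp_minus_to_infinity[OF c, of 0] by simp
  hence i1: "f integrable_on {0..}"
    by (rule integrable_eq) (simp add: f_def)
  hence a1: "f absolutely_integrable_on {0..}"
    by (rule nonnegative_absolutely_integrable_1) (simp add: f_def)
  have "(\<lambda>x. f (-x)) absolutely_integrable_on {..0} \<and> integral {..0} (\<lambda>x. f (-x)) = integral {0..} f"
    by (subst has_absolute_integral_reflect_real) (use a1 in auto)
  moreover have "(\<lambda>x. f (-x)) = f" by (simp add: f_def fun_eq_iff)
  ultimately have a2: "f absolutely_integrable_on {..0}" by simp
  have "{0..} \<inter> {..0::real} = {0}" by auto
  hence neg0: "negligible ({0..} \<inter> {..0::real})" by simp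
  have "(f has_integral (integral {0..} f + integral {..0} f)) ({0..} \<union> {..0})"
    apply (rule has_integral_Un)
    using set_lebesgue_integral_eq_integral(1)[OF a1] set_lebesgue_integral_eq_integral(1)[OF a2]
    by (auto intro: integrable_integral simp: neg0)
  moreover have "{0..} \<union> {..0::real} = UNIV" by auto
  ultimately show ?thesis unfolding f_def integrable_on_def by auto
qed

lemma tail_integrable:
  fixes g :: "real \<Rightarrow> 'a::euclidean_space"
  assumes gi: "g integrable_on UNIV" and gc: "continuous_on {-real n..real n} g"
  shows "(\<lambda>w. if w \<in> {-real n..real n} then 0 else g w) integrable_on UNIV"
proof -
  have "g integrable_on {-real n..real n}"
    by (rule integrable_continuous_real) (rule gc)
  hence "(\<lambda>w. if w \<in> {-real n..real n} then g w else 0) integrable_on UNIV"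
    by (simp only: integrable_restrict_UNIV)
  from integrable_diff[OF gi this] show ?thesis
    by (rule integrable_eq) auto
qed

lemma tail_to_zero:
  fixes g :: "real \<Rightarrow> real"
  assumes gi: "g integrable_on UNIV" and g0: "\<And>w. g w \<ge> 0" and gc: "continuous_on UNIV g"
  shows "(\<lambda>n::nat. integral UNIV (\<lambda>w. if w \<in> {-real n..real n} then 0 else g w)) \<longlonglongrightarrow> 0"
proof -
  have fi: "(\<lambda>w. if w \<in> {-real n..real n} then 0 else g w) integrable_on UNIV" for n
  proof -
    have "g integrable_on {-real n..real n}"
      by (rule integrable_continuous_real) (rule continuous_on_subset[OF gc], auto)
    hence "(\<lambda>w. if w \<in> {-real n..real n} then g w else 0) integrable_on UNIV"
      by (simp only: integrable_restrict_UNIV)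
    from integrable_diff[OF gi this] show ?thesis
      by (rule integrable_eq) auto
  qed
  have conv: "(\<lambda>n. if w \<in> {-real n..real n} then 0 else g w) \<longlonglongrightarrow> 0" for w
  proof (rule tendsto_eventually)
    show "\<forall>\<^sub>F n in sequentially. (if w \<in> {-real n..real n} then 0 else g w) = 0"
      unfolding eventually_sequentially
    proof (intro exI allI impI)
      fix n assume "nat \<lceil>\<bar>w\<bar>\<rceil> \<le> n"
      hence "\<bar>w\<bar> \<le> real n" by linarith
      thus "(if w \<in> {-real n..real n} then 0 else g w) = 0" by auto
    qed
  qed
  have "(\<lambda>n. integral UNIV (\<lambda>w. if w \<in> {-real n..real n} then 0 else g w)) \<longlonglongrightarrow> integral UNIV (\<lambda>w. 0::real)"
    using dominated_convergence(2)[where h=g and g="\<lambda>w. 0" and f = "\<lambda>(n::nat) w. if w \<in> {-real n..real n} then 0 else g w" and S=UNIV, OF fi gi _ conv]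
    by (auto simp: g0)
  thus ?thesis by simp
qed



lemma shift_identity:
  fixes v s t :: real assumes s: "s > 0"
  defines "L \<equiv> ln (s/2)"
  shows "exp (v * (t+L) - exp (t+L) - (s^2/4)*exp(-(t+L))) / ((s/2) powr v) = exp(-s*cosh t + v * t)"
proof -
  have e1: "exp (t+L) = exp t * (s/2)" using s by (simp add: exp_add L_def)
  have e2: "exp (-(t+L)) = exp (-t) * (2/s)" using s
    by (simp add: exp_diff L_def exp_minus field_simps)
  have P: "(s/2) powr v = exp (v * L)" using s by (simp add: powr_def L_def mult.commute)
  have "v * (t+L) - exp (t+L) - (s^2/4)*exp(-(t+L)) - v * L = -s*cosh t + v * t"
    unfolding e1 e2 using s by (simp add: cosh_def field_simps power2_eq_square)
  hence "exp (v * (t+L) - exp (t+L) - (s^2/4)*exp(-(t+L))) / exp (v * L) = exp(-s*cosh t + v * t)"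
    by (simp add: exp_diff[symmetric])
  thus ?thesis by (simp add: P)
qed

lemma even_identity:
  fixes v s t :: real
  shows "exp(-s*cosh t) * cosh(v * t) = (exp(-s*cosh t + v * t) + exp(-s*cosh (-t) + v * (-t)))/2"
proof -
  have c: "cosh (v * t) = (exp (v * t) + exp (-(v * t)))/2" by (simp add: cosh_def)
  have e1: "exp(-s*cosh t + v * t) = exp(-s*cosh t) * exp(v * t)" by (simp only: exp_add)
  have e2: "exp(-s*cosh (-t) + v * (-t)) = exp(-s*cosh t) * exp(-(v * t))" by (simp only: exp_add cosh_minus mult_minus_right)
  show ?thesis unfolding c e1 e2 by (simp add: algebra_simps add_divide_distrib)
qed



lemma psi_bound:
  fixes v s w :: real assumes "v > 0" "s \<ge> 0"
  shows "\<bar>exp (v * w - exp w - (s^2/4)*exp(-w))\<bar> \<le> exp(-s/2) * exp((v+1)^2) * exp(-min v 1 * \<bar>w\<bar>)"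
proof -
  have "exp (v * w - exp w - (s^2/4)*exp(-w)) \<le> exp (-s/2 + ((v+1)^2 - min v 1 * \<bar>w\<bar>))"
    using maj_exponent[of v v v s w] assms by simp
  moreover have "exp(-s/2) * exp((v+1)^2) * exp(-min v 1 * \<bar>w\<bar>) = exp (-s/2 + ((v+1)^2 - min v 1 * \<bar>w\<bar>))"
    by (simp add: mult_exp_exp)
  ultimately show ?thesis by simp
qed

lemma psi_abs_int:
  fixes v s :: real assumes "v > 0" "s \<ge> 0"
  shows "(\<lambda>w. exp (v * w - exp w - (s^2/4)*exp(-w))) absolutely_integrable_on UNIV"
proof (rule measurable_bounded_by_integrable_imp_absolutely_integrable)
  show "(\<lambda>w. exp (v * w - exp w - (s^2/4)*exp(-w))) \<in> borel_measurable (lebesgue_on UNIV)"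
    by (rule continuous_imp_measurable_on_sets_lebesgue) (auto intro!: continuous_intros)
  have "min v 1 > 0" using assms by simp
  from integrable_on_cmult_left[OF exp_abs_integrable[OF this], of "exp(-s/2) * exp((v+1)^2)"]
  show "(\<lambda>w. exp(-s/2) * exp((v+1)^2) * exp(-min v 1 * \<bar>w\<bar>)) integrable_on UNIV" by simp
  show "norm (exp (v * w - exp w - (s^2/4)*exp(-w))) \<le> exp(-s/2) * exp((v+1)^2) * exp(-min v 1 * \<bar>w\<bar>)" for w
    using psi_bound[OF assms] by simp
qed simp


lemma bessel_repr:
  fixes v s :: real assumes v: "v > 0" and s: "s > 0"
  shows "integral UNIV (\<lambda>w. exp (v * w - exp w - (s^2/4)*exp(-w))) = 2 powr (1-v) * s powr v * besselK v s"
proof -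
  define \<psi> where "\<psi> = (\<lambda>w. exp (v * w - exp w - (s^2/4)*exp(-w)))"
  define L where "L = ln (s/2)"
  define P where "P = (s/2) powr v"
  define \<phi> where "\<phi> = (\<lambda>t. exp(-s*cosh t + v * t))"
  define H where "H = integral UNIV \<psi>"
  have P0: "P > 0" using s by (simp add: P_def)
  have a\<psi>: "\<psi> absolutely_integrable_on UNIV" using psi_abs_int[of v s] v s by (simp add: \<psi>_def)
  have im: "(\<lambda>t. t + L) ` UNIV = UNIV"
  proof -
    have "x \<in> (\<lambda>t. t + L) ` UNIV" for x by (rule image_eqI[where x="x - L"]) auto
    thus ?thesis by blast
  qed
  have a\<psi>P: "(\<lambda>w. \<psi> w / P) absolutely_integrable_on ((\<lambda>t. t + L) ` UNIV) \<and>
      integral ((\<lambda>t. t + L) ` UNIV) (\<lambda>w. \<psi> w / P) = H / P"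
    unfolding im H_def using a\<psi> by (simp only: set_integrable_divide integral_divide)
  have der: "((\<lambda>t. t + L) has_field_derivative 1) (at x within UNIV)" for x
    by (rule derivative_eq_intros refl)+ simp
  have "(\<lambda>x. \<bar>1\<bar> * (\<psi> (x + L) / P)) absolutely_integrable_on UNIV \<and>
      integral UNIV (\<lambda>x. \<bar>1\<bar> * (\<psi> (x + L) / P)) = H / P"
    using has_absolute_integral_change_of_variables_1'[of UNIV "\<lambda>t. t + L" "\<lambda>_. 1" "\<lambda>w. \<psi> w / P" "H/P"] 
      der a\<psi>P by simp
  moreover have "(\<lambda>x. \<bar>1\<bar> * (\<psi> (x + L) / P)) = \<phi>"
  proof
    fix x show "\<bar>1\<bar> * (\<psi> (x + L) / P) = \<phi> x"
      using shift_identity[OF s, of v x] unfolding \<psi>_def \<phi>_def P_def L_def by simp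
  qed
  ultimately have a\<phi>: "\<phi> absolutely_integrable_on UNIV" and i\<phi>: "integral UNIV \<phi> = H / P" by auto
  have a1: "\<phi> absolutely_integrable_on {0..}" by (rule set_integrable_subset[OF a\<phi>]) auto
  have a2: "\<phi> absolutely_integrable_on {..0}" by (rule set_integrable_subset[OF a\<phi>]) auto
  have i1: "\<phi> integrable_on {0..}" by (rule set_lebesgue_integral_eq_integral(1)[OF a1])
  have i2: "\<phi> integrable_on {..0}" by (rule set_lebesgue_integral_eq_integral(1)[OF a2])
  have "{0..} \<inter> {..0::real} = {0}" by auto
  hence neg0: "negligible ({0..} \<inter> {..0::real})" by simp
  have "(\<phi> has_integral (integral {0..} \<phi> + integral {..0} \<phi>)) ({0..} \<union> {..0})"
    by (rule has_integral_Un[OF integrable_integral[OF i1] integrable_integral[OF i2] neg0])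
  moreover have "{0..} \<union> {..0::real} = UNIV" by auto
  ultimately have "(\<phi> has_integral (integral {0..} \<phi> + integral {..0} \<phi>)) UNIV" by simp
  hence sum: "integral {0..} \<phi> + integral {..0} \<phi> = H / P"
    using i\<phi> integral_unique by metis
  have refl: "(\<lambda>x. \<phi> (-x)) absolutely_integrable_on {0..} \<and> integral {0..} (\<lambda>x. \<phi> (-x)) = integral {..0} \<phi>"
    by (subst has_absolute_integral_reflect_real) (use a2 in auto)
  have i3: "(\<lambda>x. \<phi> (-x)) integrable_on {0..}"
    using refl set_lebesgue_integral_eq_integral(1) by blast
  have "besselK v s = integral {0..} (\<lambda>t. (\<phi> t + \<phi> (-t))/2)"
    unfolding besselK_def
  proof (rule integral_cong)
    fix t show "exp (- s * cosh t) * cosh (v * t) = (\<phi> t + \<phi> (-t))/2"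
      unfolding \<phi>_def by (rule even_identity)
  qed
  also have "\<dots> = (integral {0..} \<phi> + integral {0..} (\<lambda>t. \<phi> (-t)))/2"
    by (simp only: integral_divide integral_add[OF i1 i3])
  also have "\<dots> = H / P / 2" using refl sum by simp
  finally have "besselK v s = H / P / 2" .
  hence "H = 2 * P * besselK v s" using P0 by (simp add: field_simps)
  also have "2 * P = 2 powr (1-v) * s powr v"
  proof -
    have "P = s powr v / 2 powr v" unfolding P_def using s by (simp add: powr_divide)
    moreover have "2 powr (1-v) = 2 / 2 powr v" by (simp add: powr_diff)
    ultimately show ?thesis by simp
  qed
  finally show ?thesis by (simp add: H_def \<psi>_def)
qed



definition fz :: "real \<Rightarrow> complex \<Rightarrow> real \<Rightarrow> complex" where
  "fz s z w = exp (z * of_real w - of_real (exp w + (s^2/4)*exp(-w)))"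

definition Gf :: "real \<Rightarrow> complex \<Rightarrow> complex" where
  "Gf s z = integral UNIV (fz s z)"

definition Mj :: "real \<Rightarrow> real \<Rightarrow> real \<Rightarrow> real" where
  "Mj nu s w = exp(-s/2) * exp((3*nu/2+1)^2) * exp(-min (nu/2) 1 * \<bar>w\<bar>)"

lemma norm_fz: "norm (fz s z w) = exp (Re z * w - exp w - (s^2/4)*exp(-w))"
  by (simp add: fz_def norm_exp_eq_Re)

lemma Re_cball:
  assumes "z \<in> cball (of_real nu) r"
  shows "nu - r \<le> Re z" "Re z \<le> nu + r"
proof -
  have "\<bar>Re (of_real nu - z)\<bar> \<le> r" using assms abs_Re_le_cmod[of "of_real nu - z"] by (simp add: dist_norm)
  thus "nu - r \<le> Re z" "Re z \<le> nu + r" by auto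
qed

lemma fz_bound:
  assumes "nu > 0" "s \<ge> 0" "z \<in> cball (of_real nu :: complex) (nu/2)"
  shows "norm (fz s z w) \<le> Mj nu s w"
proof -
  have r: "nu/2 \<le> Re z" "Re z \<le> 3*nu/2" using Re_cball[OF assms(3)] by auto
  have "Re z * w - exp w - (s^2/4)*exp(-w) \<le> -s/2 + ((3*nu/2+1)^2 - min (nu/2) 1 * \<bar>w\<bar>)"
    by (rule maj_exponent) (use assms r in auto)
  hence "exp (Re z * w - exp w - (s^2/4)*exp(-w)) \<le> exp (-s/2 + ((3*nu/2+1)^2 - min (nu/2) 1 * \<bar>w\<bar>))"
    by simp
  moreover have "Mj nu s w = exp (-s/2 + ((3*nu/2+1)^2 - min (nu/2) 1 * \<bar>w\<bar>))"
    by (simp add: Mj_def mult_exp_exp)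
  ultimately show ?thesis by (simp add: norm_fz)
qed

lemma Mj_integrable: "nu > 0 \<Longrightarrow> Mj nu s integrable_on UNIV"
proof -
  assume "nu > 0"
  hence "min (nu/2) 1 > 0" by simp
  from integrable_on_cmult_left[OF exp_abs_integrable[OF this], of "exp(-s/2) * exp((3*nu/2+1)^2)"]
  show ?thesis unfolding Mj_def by simp
qed

lemma Mj_cont: "continuous_on UNIV (Mj nu s)"
  unfolding Mj_def by (intro continuous_intros)

lemma Mj_nonneg: "Mj nu s w \<ge> 0"
  unfolding Mj_def by simp

lemma fz_cont: "continuous_on UNIV (fz s z)"
  unfolding fz_def by (intro continuous_intros)

lemma fz_integrable:
  assumes "nu > 0" "s \<ge> 0" "z \<in> cball (of_real nu :: complex) (nu/2)"
  shows "fz s z integrable_on UNIV"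
  by (rule measurable_bounded_by_integrable_imp_integrable[OF _ Mj_integrable[OF assms(1)]])
     (auto intro!: continuous_imp_measurable_on_sets_lebesgue fz_cont fz_bound assms)

lemma integral_Mj: "integral UNIV (Mj nu s) = exp(-s/2) * (exp((3*nu/2+1)^2) * integral UNIV (\<lambda>w. exp(-min (nu/2) 1 * \<bar>w\<bar>)))"
  unfolding Mj_def by (simp add: mult.assoc)

lemma Gf_bound:
  assumes "nu > 0" "s \<ge> 0" "z \<in> cball (of_real nu :: complex) (nu/2)"
  shows "norm (Gf s z) \<le> exp(-s/2) * (exp((3*nu/2+1)^2) * integral UNIV (\<lambda>w. exp(-min (nu/2) 1 * \<bar>w\<bar>)))"
  unfolding integral_Mj[symmetric] Gf_def
  by (rule integral_norm_bound_integral[OF fz_integrable[OF assms] Mj_integrable[OF assms(1)] fz_bound[OF assms]])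

lemma Gf_uniform:
  assumes nu: "nu > 0" and s: "s \<ge> 0"
  shows "uniform_limit (cball (of_real nu :: complex) (nu/2)) (\<lambda>n z. integral {-real n..real n} (fz s z)) (Gf s) sequentially"
proof (rule uniform_limitI)
  fix e :: real assume e: "e > 0"
  have T: "(\<lambda>n::nat. integral UNIV (\<lambda>w. if w \<in> {-real n..real n} then 0 else Mj nu s w)) \<longlonglongrightarrow> 0"
    by (rule tail_to_zero[OF Mj_integrable[OF nu] Mj_nonneg Mj_cont])
  have ev: "\<forall>\<^sub>F n in sequentially. integral UNIV (\<lambda>w. if w \<in> {-real n..real n} then 0 else Mj nu s w) < e"
    using order_tendstoD(2)[OF T e] .
  show "\<forall>\<^sub>F n in sequentially. \<forall>z\<in>cball (of_real nu :: complex) (nu/2). dist (integral {-real n..real n} (fz s z)) (Gf s z) < e"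
    using ev
  proof eventually_elim
    case (elim n)
    show ?case
    proof
      fix z assume z: "z \<in> cball (of_real nu :: complex) (nu/2)"
      have fi: "fz s z integrable_on UNIV" by (rule fz_integrable[OF nu s z])
      have "fz s z integrable_on {-real n..real n}"
        by (rule integrable_continuous_real) (rule continuous_on_subset[OF fz_cont], auto)
      hence ri: "(\<lambda>w. if w \<in> {-real n..real n} then fz s z w else 0) integrable_on UNIV"
        by (simp only: integrable_restrict_UNIV)
      have "Gf s z - integral {-real n..real n} (fz s z)
          = integral UNIV (fz s z) - integral UNIV (\<lambda>w. if w \<in> {-real n..real n} then fz s z w else 0)"
        by (simp only: Gf_def integral_restrict_UNIV)
      also have "\<dots> = integral UNIV (\<lambda>w. fz s z w - (if w \<in> {-real n..real n} then fz s z w else 0))"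
        by (rule integral_diff[OF fi ri, symmetric])
      also have "\<dots> = integral UNIV (\<lambda>w. if w \<in> {-real n..real n} then 0 else fz s z w)"
        by (rule integral_cong) auto
      finally have eq: "Gf s z - integral {-real n..real n} (fz s z) = integral UNIV (\<lambda>w. if w \<in> {-real n..real n} then 0 else fz s z w)" .
      have "norm (integral UNIV (\<lambda>w. if w \<in> {-real n..real n} then 0 else fz s z w))
          \<le> integral UNIV (\<lambda>w. if w \<in> {-real n..real n} then 0 else Mj nu s w)"
      proof (rule integral_norm_bound_integral)
        show "(\<lambda>w. if w \<in> {-real n..real n} then 0 else fz s z w) integrable_on UNIV"
          by (rule tail_integrable[OF fi]) (rule continuous_on_subset[OF fz_cont], simp)
        show "(\<lambda>w. if w \<in> {-real n..real n} then 0 else Mj nu s w) integrable_on UNIV"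
          by (rule tail_integrable[OF Mj_integrable[OF nu]]) (rule continuous_on_subset[OF Mj_cont], simp)
        show "norm (if w \<in> {-real n..real n} then 0 else fz s z w) \<le> (if w \<in> {-real n..real n} then 0 else Mj nu s w)" for w
          using fz_bound[OF nu s z, of w] by simp
      qed
      with eq elim show "dist (integral {-real n..real n} (fz s z)) (Gf s z) < e"
        by (simp add: dist_norm norm_minus_commute)
    qed
  qed
qed

lemma fz_deriv: "((\<lambda>x. fz s x t) has_field_derivative (of_real t * fz s x t)) (at x within U)"
  unfolding fz_def by (auto intro!: derivative_eq_intros)

lemma In_holo: "(\<lambda>z. integral {-real n..real n} (fz s z)) holomorphic_on UNIV"
proof -
  have "(\<lambda>z. integral (cbox (-real n) (real n)) (fz s z)) holomorphic_on UNIV"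
  proof (rule leibniz_rule_holomorphic[where fx = "\<lambda>x t. of_real t * fz s x t"])
    show "(fz s x) integrable_on cbox (-real n) (real n)" for x
      by (rule integrable_continuous) (rule continuous_on_subset[OF fz_cont], auto)
    show "continuous_on (UNIV \<times> cbox (- real n) (real n)) (\<lambda>(x, t). complex_of_real t * fz s x t)"
      unfolding fz_def by (auto simp: case_prod_beta intro!: continuous_intros)
  qed (auto intro: fz_deriv)
  thus ?thesis by simp
qed

lemma Gf_holo:
  assumes nu: "nu > 0" and s: "s \<ge> 0"
  shows "continuous_on (cball (of_real nu :: complex) (nu/2)) (Gf s)" "Gf s holomorphic_on ball (of_real nu :: complex) (nu/2)"
proof -
  have "\<forall>\<^sub>F n in sequentially. continuous_on (cball (of_real nu :: complex) (nu/2)) (\<lambda>z. integral {-real n..real n} (fz s z))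
     \<and> (\<lambda>z. integral {-real n..real n} (fz s z)) holomorphic_on ball (of_real nu :: complex) (nu/2)"
  proof (intro always_eventually allI conjI)
    fix n :: nat
    show "(\<lambda>z. integral {-real n..real n} (fz s z)) holomorphic_on ball (of_real nu :: complex) (nu/2)"
      by (rule holomorphic_on_subset[OF In_holo]) simp
    show "continuous_on (cball (of_real nu :: complex) (nu/2)) (\<lambda>z. integral {-real n..real n} (fz s z))"
      by (rule holomorphic_on_imp_continuous_on, rule holomorphic_on_subset[OF In_holo]) simp
  qed
  from holomorphic_uniform_limit[OF this Gf_uniform[OF nu s] trivial_limit_sequentially]
  show "continuous_on (cball (of_real nu :: complex) (nu/2)) (Gf s)" "Gf s holomorphic_on ball (of_real nu :: complex) (nu/2)" by blast+
qed



lemma Gf_real: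
  fixes v s :: real assumes v: "v > 0" and s: "s > 0"
  shows "Gf s (of_real v) = of_real (2 powr (1-v) * s powr v * besselK v s)"
proof -
  define \<psi> where "\<psi> = (\<lambda>w. exp (v * w - exp w - (s^2/4)*exp(-w)))"
  have "\<psi> integrable_on UNIV"
    using set_lebesgue_integral_eq_integral(1)[OF psi_abs_int[of v s]] v s by (simp add: \<psi>_def)
  hence "((\<lambda>w. of_real (\<psi> w) :: complex) has_integral of_real (integral UNIV \<psi>)) UNIV"
    by (intro has_integral_of_real integrable_integral)
  moreover have "fz s (of_real v) = (\<lambda>w. of_real (\<psi> w))"
    by (simp add: fun_eq_iff fz_def \<psi>_def exp_of_real[symmetric] diff_diff_eq)
  ultimately have "Gf s (of_real v) = of_real (integral UNIV \<psi>)"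
    unfolding Gf_def by (simp add: integral_unique)
  thus ?thesis using bessel_repr[OF v s] by (simp add: \<psi>_def)
qed

lemma deriv_real_holo:
  fixes F :: "complex \<Rightarrow> complex" and f :: "real \<Rightarrow> real"
  assumes holo: "F holomorphic_on S" "open S" and J: "open J" "\<And>x. x \<in> J \<Longrightarrow> of_real x \<in> S"
    and eq: "\<And>x. x \<in> J \<Longrightarrow> f x = Re (F (of_real x))"
  shows "x \<in> J \<Longrightarrow> (deriv^^m) f x = Re ((deriv^^m) F (of_real x))"
proof (induction m arbitrary: x)
  case 0 thus ?case using eq by simp
next
  case (Suc m)
  have "((deriv^^m) F has_field_derivative (deriv^^Suc m) F (of_real x)) (at (of_real x))"
    by (rule has_field_derivative_higher_deriv[OF holo J(2)[OF Suc.prems]])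
  hence "((\<lambda>y. (deriv^^m) F (of_real y)) has_vector_derivative (deriv^^Suc m) F (of_real x)) (at x)"
    by (rule has_vector_derivative_real_field)
  hence "((\<lambda>y. Re ((deriv^^m) F (of_real y))) has_field_derivative Re ((deriv^^Suc m) F (of_real x))) (at x)"
    by (rule has_field_derivative_Re)
  hence "((deriv^^m) f has_field_derivative Re ((deriv^^Suc m) F (of_real x))) (at x)"
    by (rule has_field_derivative_transform_within_open[OF _ J(1) Suc.prems]) (simp add: Suc.IH)
  hence "deriv ((deriv^^m) f) x = Re ((deriv^^Suc m) F (of_real x))"
    by (rule DERIV_imp_deriv)
  thus ?case by simp
qed

lemma deriv_const_pow:
  "(deriv^^Suc m) (\<lambda>_::real. c::real) = (\<lambda>_. 0)"
proof (induction m)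
  case 0 show ?case by (simp add: fun_eq_iff)
next
  case (Suc m) thus ?case by (simp add: fun_eq_iff)
qed



lemma coercive:
  fixes A :: "real^'d^'d"
  assumes "pos_def A"
  obtains mu where "mu > 0" "\<And>r. r \<bullet> (A *v r) \<ge> mu * norm r ^ 2"
proof -
  have c: "compact (sphere (0::real^'d) 1)" by (rule compact_sphere)
  have ne: "sphere (0::real^'d) 1 \<noteq> {}" by (simp only: sphere_eq_empty)
  have co: "continuous_on (sphere (0::real^'d) 1) (\<lambda>x. x \<bullet> (A *v x))"
    by (intro continuous_intros)
  obtain x0 where x0: "x0 \<in> sphere 0 1" and min: "\<And>y. y \<in> sphere 0 1 \<Longrightarrow> x0 \<bullet> (A *v x0) \<le> y \<bullet> (A *v y)"
    using continuous_attains_inf[OF c ne co] by blast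
  have "x0 \<noteq> 0" using x0 by auto
  hence mu: "x0 \<bullet> (A *v x0) > 0" using assms unfolding pos_def_def by blast
  show ?thesis
  proof (rule that[OF mu])
    fix r :: "real^'d"
    show "r \<bullet> (A *v r) \<ge> (x0 \<bullet> (A *v x0)) * norm r ^ 2"
    proof (cases "r = 0")
      case True thus ?thesis by simp
    next
      case False
      define c where "c = norm r"
      define u where "u = r /\<^sub>R c"
      have u: "u \<in> sphere 0 1" using False by (simp add: u_def c_def)
      have r: "c *\<^sub>R u = r" using False by (simp add: u_def c_def)
      have "r \<bullet> (A *v r) = (c *\<^sub>R u) \<bullet> (A *v (c *\<^sub>R u))" by (simp only: r)
      also have "\<dots> = c ^ 2 * (u \<bullet> (A *v u))"
        by (simp add: matrix_vector_mult_scaleR power2_eq_square)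
      finally have eq: "r \<bullet> (A *v r) = c ^ 2 * (u \<bullet> (A *v u))" .
      have "c ^ 2 * (x0 \<bullet> (A *v x0)) \<le> c ^ 2 * (u \<bullet> (A *v u))"
        by (rule mult_left_mono[OF min[OF u]]) simp
      thus ?thesis unfolding eq c_def by (simp add: mult.commute)
    qed
  qed
qed

lemma poly_exp_bound:
  fixes t k :: real and n :: nat
  assumes "k > 0" "t \<ge> 0"
  shows "(1 + t^n) * exp(-k*t) \<le> 1 + (real n / k)^n"
proof -
  have tn: "t^n \<le> (real n / k)^n * exp(k*t)"
  proof (cases "n = 0")
    case True thus ?thesis using assms by simp
  next
    case False
    hence n: "n > 0" by simp
    have kt: "k*t \<ge> 0" using assms by simp
    have "(1 + (k*t) / real n) ^ n \<le> exp (k*t)"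
    proof (rule exp_ge_one_plus_x_over_n_power_n)
      show "k*t \<ge> - real n" using kt by linarith
    qed (rule n)
    moreover have "((k*t) / real n) ^ n \<le> (1 + (k*t) / real n) ^ n"
      by (rule power_mono) (use kt in auto)
    ultimately have "((k*t) / real n) ^ n \<le> exp (k*t)" by linarith
    hence "(real n / k)^n * ((k*t) / real n) ^ n \<le> (real n / k)^n * exp (k*t)"
      by (rule mult_left_mono) (use assms in auto)
    moreover have "(real n / k) * ((k*t) / real n) = t" using assms n by simp
    hence "(real n / k)^n * ((k*t) / real n) ^ n = t^n"
      by (simp only: power_mult_distrib[symmetric])
    ultimately show ?thesis by simp
  qed
  have e1: "exp(-k*t) \<le> 1" using assms by simp
  have "t^n * exp(-k*t) \<le> (real n / k)^n * exp(k*t) * exp(-k*t)"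
    by (rule mult_right_mono[OF tn]) simp
  also have "exp(k*t) * exp(-k*t) = 1" by (simp add: mult_exp_exp)
  hence "(real n / k)^n * exp(k*t) * exp(-k*t) = (real n / k)^n" by (simp only: mult.assoc)
  finally have e2: "t^n * exp(-k*t) \<le> (real n / k)^n" .
  show ?thesis using e1 e2 unfolding distrib_right mult_1 by linarith
qed



theorem lemma9:
  fixes A :: "real^'d^'d" and lmin lmax nu :: real
  assumes "transpose A = A" and "pos_def A"
    and "0 < lmin" and "lmin \<le> lmax"
    and "\<forall>l. is_eigenvalue A l \<longrightarrow> l \<in> {lmin..lmax}"
    and "nu > 0"
  shows "\<forall>(beta::nat) (m::nat). \<exists>C::real. \<forall>r::real^'d.
           \<bar>(deriv ^^ m) (\<lambda>v. matern A v r) nu\<bar> \<le> C / (1 + norm r ^ (2 * beta))"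
proof -
  have nu: "nu > 0" by (rule assms(6))
  obtain mu where mu: "mu > 0" "\<And>r. r \<bullet> (A *v r) \<ge> mu * norm r ^ 2"
    using coercive[OF assms(2)] by blast
  show ?thesis
  proof (intro allI)
    fix beta m :: nat
    define \<rho> where "\<rho> = nu/2"
    have \<rho>: "\<rho> > 0" using nu by (simp add: \<rho>_def)
    have "bounded (rGamma ` cball (of_real nu :: complex) \<rho>)"
      by (rule compact_imp_bounded[OF compact_continuous_image[OF continuous_on_rGamma compact_cball]])
    then obtain R where R: "R > 0" "\<And>z. z \<in> cball (of_real nu :: complex) \<rho> \<Longrightarrow> norm (rGamma z) \<le> R"
      unfolding bounded_pos by blast
    define K0 where "K0 = exp((3*nu/2+1)^2) * integral UNIV (\<lambda>w. exp(-min (nu/2) 1 * \<bar>w\<bar>))"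
    have "min (nu/2) 1 > 0" using nu by simp
    hence "integral UNIV (\<lambda>w. exp(-min (nu/2) 1 * \<bar>w\<bar>)) \<ge> 0"
      by (intro integral_nonneg exp_abs_integrable) auto
    hence K0: "K0 \<ge> 0" by (simp add: K0_def)
    define B1 where "B1 = R * K0 + 1"
    have B1: "B1 > 0" using R K0 by (simp add: B1_def add_nonneg_pos)
    define n where "n = 2*beta"
    define k where "k = sqrt mu / 2"
    have k: "k > 0" using mu by (simp add: k_def)
    define D where "D = 1 + (real n / k)^n"
    define C where "C = max 2 (fact m * B1 / \<rho>^m * D)"
    show "\<exists>C. \<forall>r::real^'d. \<bar>(deriv ^^ m) (\<lambda>v. matern A v r) nu\<bar> \<le> C / (1 + norm r ^ (2 * beta))"
    proof (intro exI allI)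
      fix r :: "real^'d"
      show "\<bar>(deriv ^^ m) (\<lambda>v. matern A v r) nu\<bar> \<le> C / (1 + norm r ^ (2 * beta))"
      proof (cases "r = 0")
        case True
        have fe: "(\<lambda>v. matern A v r) = (\<lambda>_. 1)" using True by (simp add: fun_eq_iff matern_def)
        have le1: "\<bar>(deriv ^^ m) (\<lambda>_::real. 1::real) nu\<bar> \<le> 1"
        proof (cases m)
          case 0 thus ?thesis by simp
        next
          case (Suc m') thus ?thesis by (simp only: deriv_const_pow)
        qed
        have "norm r ^ (2 * beta) \<le> 1" using True by (cases beta) auto
        hence den: "0 < 1 + norm r ^ (2 * beta)" "1 + norm r ^ (2 * beta) \<le> 2" by (auto intro: add_pos_nonneg)
        have "1 \<le> C / (1 + norm r ^ (2 * beta))"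
          using den by (simp add: C_def field_simps)
        thus ?thesis using le1 fe by simp
      next
        case False
        define s where "s = sqrt (r \<bullet> (A *v r))"
        have pos: "r \<bullet> (A *v r) > 0" using assms(2) False by (simp add: pos_def_def)
        have s0: "s > 0" using pos by (simp add: s_def)
        have sge: "sqrt mu * norm r \<le> s"
        proof -
          have "sqrt (mu * norm r ^ 2) \<le> s" unfolding s_def by (rule real_sqrt_le_mono[OF mu(2)])
          thus ?thesis using mu by (simp add: real_sqrt_mult)
        qed
        define \<Phi> where "\<Phi> = (\<lambda>z. rGamma z * Gf s z)"
        have holo: "\<Phi> holomorphic_on ball (of_real nu) \<rho>"
          unfolding \<Phi>_def \<rho>_def using Gf_holo(2)[OF nu less_imp_le[OF s0]]
          by (intro holomorphic_intros) auto
        have cont: "continuous_on (cball (of_real nu) \<rho>) \<Phi>"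
          unfolding \<Phi>_def \<rho>_def using Gf_holo(1)[OF nu less_imp_le[OF s0]]
          by (intro continuous_intros) auto
        have bnd: "norm (\<Phi> z) \<le> R * (exp(-s/2) * K0)" if z: "z \<in> cball (of_real nu) \<rho>" for z
        proof -
          have "norm (Gf s z) \<le> exp(-s/2) * K0"
            using Gf_bound[OF nu less_imp_le[OF s0]] z by (simp add: K0_def \<rho>_def)
          thus ?thesis unfolding \<Phi>_def norm_mult
            by (intro mult_mono R(2)[OF z]) (use R in auto)
        qed
        have lt: "R * (exp(-s/2) * K0) < B1 * exp(-s/2)"
          by (simp add: B1_def algebra_simps)
        have B: "norm ((deriv^^m) \<Phi> (of_real nu)) \<le> fact m * B1 / \<rho>^m * exp(-s/2)"
        proof (cases "m = 0")
          case True
          have "norm (\<Phi> (of_real nu)) \<le> R * (exp(-s/2) * K0)" by (rule bnd) (use \<rho> in simp)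
          hence "norm (\<Phi> (of_real nu)) \<le> B1 * exp(-s/2)" using lt by linarith
          with True show ?thesis by simp
        next
          case False
          have "norm ((deriv^^m) \<Phi> (of_real nu)) \<le> fact m * (B1 * exp(-s/2)) / \<rho>^m"
          proof (rule Cauchy_higher_deriv_bound[OF holo cont _ \<rho>])
            fix w :: complex assume "w \<in> ball (of_real nu) \<rho>"
            hence "norm (\<Phi> w) \<le> R * (exp(-s/2) * K0)" by (intro bnd) auto
            hence "norm (\<Phi> w) < B1 * exp(-s/2)" using lt by linarith
            thus "\<Phi> w \<in> ball 0 (B1 * exp(-s/2))" by simp
          qed (use False in simp)
          thus ?thesis by simp
        qed
        define J where "J = {nu - \<rho> <..< nu + \<rho>}"
        have link: "(deriv^^m) (\<lambda>v. matern A v r) nu = Re ((deriv^^m) \<Phi> (of_real nu))"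
        proof (rule deriv_real_holo[OF holo open_ball, of J])
          show "open J" by (simp add: J_def)
          show "nu \<in> J" using \<rho> by (simp add: J_def)
          show "(of_real x :: complex) \<in> ball (of_real nu) \<rho>" if "x \<in> J" for x
          proof -
            have "dist (of_real nu :: complex) (of_real x) = dist nu x" by (rule dist_of_real)
            thus ?thesis using that by (auto simp: J_def dist_real_def)
          qed
          show "matern A x r = Re (\<Phi> (of_real x))" if "x \<in> J" for x
          proof -
            have x: "x > 0" using that by (simp add: J_def \<rho>_def)
            have "\<Phi> (of_real x) = of_real (rGamma x * (2 powr (1-x) * s powr x * besselK x s))"
              unfolding \<Phi>_def Gf_real[OF x s0] rGamma_complex_of_real by simp
            hence "Re (\<Phi> (of_real x)) = rGamma x * (2 powr (1-x) * s powr x * besselK x s)" by simp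
            also have "\<dots> = matern A x r"
              using False by (simp add: matern_def Let_def s_def[symmetric] rGamma_inverse_Gamma field_simps)
            finally show ?thesis by simp
          qed
        qed
        have step1: "\<bar>(deriv^^m) (\<lambda>v. matern A v r) nu\<bar> \<le> fact m * B1 / \<rho>^m * exp(-s/2)"
          unfolding link using abs_Re_le_cmod B by (rule order_trans)
        have "k * norm r \<le> s/2" using sge by (simp add: k_def)
        hence step2: "exp(-s/2) \<le> exp(-k * norm r)" by simp
        have den: "1 + norm r ^ n > 0" by (simp add: add_pos_nonneg)
        have "(1 + norm r ^ n) * exp(-k * norm r) \<le> D"
          unfolding D_def by (rule poly_exp_bound[OF k]) simp
        hence step3: "exp(-k * norm r) \<le> D / (1 + norm r ^ n)"
          using den by (simp add: field_simps)
        have F0: "fact m * B1 / \<rho>^m \<ge> 0" using B1 \<rho> by simp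
        have "\<bar>(deriv^^m) (\<lambda>v. matern A v r) nu\<bar> \<le> fact m * B1 / \<rho>^m * (D / (1 + norm r ^ n))"
          using step1 mult_left_mono[OF order_trans[OF step2 step3] F0] by linarith
        also have "\<dots> = (fact m * B1 / \<rho>^m * D) / (1 + norm r ^ n)" by simp
        also have "\<dots> \<le> C / (1 + norm r ^ n)"
          using den by (intro divide_right_mono) (auto simp: C_def)
        finally show ?thesis by (simp add: n_def)
      qed
    qed
  qed
qed

end
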